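(* Consider $N\ge2$ agents $x_i(k+1)=Ax_i(k)+Bu_i(k)$, $y_i(k)=Cx_i(k)$, $i=1,\dots,N$, where all eigenvalues of $A$ lie in the closed unit disc, $(A,B)$ is stabilizable and $(C,A)$ is detectable. Let $K$ be such that $A-BK$ is Schur stable and $H$ be such that $A-HC$ is Schur stable. Each agent $i$ uses the protocol $$\begin{aligned}\eta_i(k+1)&=A\eta_i(k)+Bu_i(k)+A\hat x_i(k)-A\hat\zeta_i(k),\\ \hat x_i(k+1)&=A\hat x_i(k)-BK\hat\zeta_i(k)+H(\zeta_i(k)-C\hat x_i(k)),\\ u_i(k)&=-K\eta_i(k),\end{aligned}$$ with $\zeta_i(k)=\sum_{j=1}^N d_{ij}(y_i(k)-y_j(k))$ and $\hat\zeta_i(k)=\sum_{j=1}^N d_{ij}(\eta_i(k)-\eta_j(k))$. Then for every $N$, every weighted directed graph on $N$ nodes containing a directed spanning tree, and all initial conditions, $\lim_{k\to\infty}(x_i(k)-x_j(k))=0$ for all $i,j$. In particular, the scalable state synchronization problem with localized information exchange (partial-state coupling) is solvable by a protocol designed using only $(C,A,B)$.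
   Context: The network is a weighted directed graph with adjacency matrix $[a_{ij}]$, $a_{ij}\ge0$, $a_{ii}=0$ ($a_{ij}>0$ means an edge from $j$ to $i$); weighted in-degree $d_{in}(i)=\sum_j a_{ij}$. The row stochastic matrix $D=[d_{ij}]$ is given by $d_{ij}=a_{ij}/(1+d_{in}(i))$ for $j\ne i$ and $d_{ii}=1/(1+d_{in}(i))$, so $\zeta_i=\frac{1}{1+d_{in}(i)}\sum_j a_{ij}(y_i-y_j)$. Schur stable means all eigenvalues in the open unit disc. A directed spanning tree is a subgraph containing all nodes in which every node except one root has exactly one parent. *)

theory Defs
  imports "HOL-Analysis.Analysis"
begin

text \<open>Complexification of a real matrix.\<close>
definition cmat :: "real^'c^'r \<Rightarrow> complex^'c^'r" where
  "cmat M = (\<chi> i j. complex_of_real (M $ i $ j))"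

text \<open>Complex eigenvalue of a real square matrix.\<close>
definition is_eigenvalue :: "real^'n^'n \<Rightarrow> complex \<Rightarrow> bool" where
  "is_eigenvalue M lam \<longleftrightarrow> (\<exists>v::complex^'n. v \<noteq> 0 \<and> cmat M *v v = lam *s v)"

definition schur_stable :: "real^'n^'n \<Rightarrow> bool" where
  "schur_stable M \<longleftrightarrow> (\<forall>lam. is_eigenvalue M lam \<longrightarrow> cmod lam < 1)"

text \<open>PBH tests: (A,B) stabilizable iff no left eigenvector w of A with eigenvalue
  |lam| >= 1 satisfies w^* B = 0;  (C,A) detectable iff no right eigenvector v of A with
  |lam| >= 1 satisfies C v = 0.\<close>
definition stabilizable :: "real^'n^'n \<Rightarrow> real^'m^'n \<Rightarrow> bool" where
  "stabilizable A B \<longleftrightarrow>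
     (\<forall>lam (w::complex^'n). w \<noteq> 0 \<and> w v* cmat A = lam *s w \<and> cmod lam \<ge> 1
        \<longrightarrow> w v* cmat B \<noteq> 0)"

definition detectable :: "real^'n^'p \<Rightarrow> real^'n^'n \<Rightarrow> bool" where
  "detectable C A \<longleftrightarrow>
     (\<forall>lam (v::complex^'n). v \<noteq> 0 \<and> cmat A *v v = lam *s v \<and> cmod lam \<ge> 1
        \<longrightarrow> cmat C *v v \<noteq> 0)"

text \<open>Weighted digraph on nodes {0..<N}: a i j > 0 is an edge from j to i.\<close>
definition weighted_digraph :: "nat \<Rightarrow> (nat \<Rightarrow> nat \<Rightarrow> real) \<Rightarrow> bool" where
  "weighted_digraph N a \<longleftrightarrow> (\<forall>i<N. a i i = 0 \<and> (\<forall>j<N. a i j \<ge> 0))"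

definition din :: "nat \<Rightarrow> (nat \<Rightarrow> nat \<Rightarrow> real) \<Rightarrow> nat \<Rightarrow> real" where
  "din N a i = (\<Sum>j<N. a i j)"

definition dmat :: "nat \<Rightarrow> (nat \<Rightarrow> nat \<Rightarrow> real) \<Rightarrow> nat \<Rightarrow> nat \<Rightarrow> real" where
  "dmat N a i j = (if j = i then 1 / (1 + din N a i) else a i j / (1 + din N a i))"

text \<open>Directed spanning tree: a root r and a parent map with an edge par i \<rightarrow> i for each
  non-root node, such that following parents from any node reaches the root.\<close>
definition has_spanning_tree :: "nat \<Rightarrow> (nat \<Rightarrow> nat \<Rightarrow> real) \<Rightarrow> bool" where
  "has_spanning_tree N a \<longleftrightarrow>
     (\<exists>r<N. \<exists>par. (\<forall>i<N. i \<noteq> r \<longrightarrow> par i < N \<and> a i (par i) > 0) \<and>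
                  (\<forall>i<N. \<exists>k. (par ^^ k) i = r))"

end

theory Submission
  imports Defs "Jordan_Normal_Form.Spectral_Radius"
begin

lemma J_le1:
  fixes A :: "complex mat"
  assumes A: "A \<in> carrier_mat n n" and n: "n > 0" and ev: "\<And>k. eigenvalue A k \<Longrightarrow> norm k \<le> 1"
  shows "\<exists>c. \<forall>k. norm_bound (A ^\<^sub>m k) (c * (real k + 1) ^ (n - 1))"
proof -
  have "spectral_radius A \<le> 1" using spectral_radius_mem_max(1)[OF A n] ev unfolding spectrum_def by auto
  then obtain c1 c2 where b: "\<forall>k. norm_bound (A ^\<^sub>m k) (c1 + c2 * of_nat k ^ (n-1))"
    using spectral_radius_jnf_norm_bound_le_1_upper_triangular[OF A] by blast
  show ?thesis
  proof (intro exI allI)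
    fix k
    have p1: "1 \<le> (real k + 1) ^ (n-1)" by simp
    have "c1 \<le> \<bar>c1\<bar> * (real k + 1) ^ (n-1)"
      using mult_left_mono[OF p1, of "\<bar>c1\<bar>"] abs_ge_self[of c1] by simp
    moreover have "c2 * real k ^ (n-1) \<le> \<bar>c2\<bar> * (real k + 1) ^ (n-1)"
      by (intro mult_mono power_mono) auto
    ultimately have le: "c1 + c2 * real k ^ (n-1) \<le> (\<bar>c1\<bar> + \<bar>c2\<bar>) * (real k + 1) ^ (n-1)"
      by (simp add: distrib_right)
    show "norm_bound (A ^\<^sub>m k) ((\<bar>c1\<bar> + \<bar>c2\<bar>) * (real k + 1) ^ (n - 1))"
      using b le unfolding norm_bound_def by (meson order_trans)
  qed
qed

lemma smult_mat_vec_assoc: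
  assumes "A \<in> carrier_mat n n" "v \<in> carrier_vec n"
  shows "(c \<cdot>\<^sub>m A) *\<^sub>v v = (c::complex) \<cdot>\<^sub>v (A *\<^sub>v v)"
  using assms by (intro eq_vecI) (auto simp: scalar_prod_def sum_distrib_left ac_simps)

lemma smult_pow_mat:
  assumes "A \<in> carrier_mat n n"
  shows "(c \<cdot>\<^sub>m A) ^\<^sub>m k = (c::complex)^k \<cdot>\<^sub>m (A ^\<^sub>m k)"
proof (induction k)
  case 0 then show ?case using assms by (auto intro!: eq_matI)
next
  case (Suc k)
  have "(c \<cdot>\<^sub>m A) ^\<^sub>m Suc k = (c^k \<cdot>\<^sub>m (A ^\<^sub>m k)) * (c \<cdot>\<^sub>m A)" using Suc by simp
  also have "\<dots> = c^k \<cdot>\<^sub>m ((A ^\<^sub>m k) * (c \<cdot>\<^sub>m A))"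
    using assms by (intro mult_smult_assoc_mat) auto
  also have "(A ^\<^sub>m k) * (c \<cdot>\<^sub>m A) = c \<cdot>\<^sub>m ((A ^\<^sub>m k) * A)"
    using assms by (intro mult_smult_distrib) auto
  finally show ?case using assms by (auto intro!: eq_matI simp: ac_simps)
qed

lemma J_lt1:
  fixes A :: "complex mat"
  assumes A: "A \<in> carrier_mat n n" and n: "n > 0" and ev: "\<And>k. eigenvalue A k \<Longrightarrow> norm k < 1"
  shows "\<exists>c \<sigma>. 0 < \<sigma> \<and> \<sigma> < 1 \<and> (\<forall>k. norm_bound (A ^\<^sub>m k) (c * \<sigma> ^ k))"
proof -
  define sr where "sr = spectral_radius A"
  have sr1: "sr < 1" using spectral_radius_mem_max(1)[OF A n] ev unfolding spectrum_def sr_def by auto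
  have sr0: "0 \<le> sr" using spectral_radius_mem_max(1)[OF A n] unfolding sr_def by auto
  define \<sigma> where "\<sigma> = (1 + sr) / 2"
  have s0: "0 < \<sigma>" and s1: "\<sigma> < 1" and ss: "sr < \<sigma>" using sr0 sr1 by (auto simp: \<sigma>_def)
  define A' where "A' = complex_of_real (1/\<sigma>) \<cdot>\<^sub>m A"
  have A': "A' \<in> carrier_mat n n" using A by (simp add: A'_def)
  have evA': "norm k \<le> sr / \<sigma>" if evk: "eigenvalue A' k" for k
  proof -
    have dA': "dim_row A' = n" using A' by auto
    obtain v where v: "v \<in> carrier_vec n" "v \<noteq> 0\<^sub>v n" "A' *\<^sub>v v = k \<cdot>\<^sub>v v"
      using evk unfolding eigenvalue_def eigenvector_def dA' by blast
    have "A *\<^sub>v v = complex_of_real \<sigma> \<cdot>\<^sub>v (A' *\<^sub>v v)"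
      unfolding A'_def using A v s0 by (simp add: smult_mat_vec_assoc smult_smult_assoc)
    also have "\<dots> = (complex_of_real \<sigma> * k) \<cdot>\<^sub>v v" using v by (simp add: smult_smult_assoc)
    finally have "eigenvalue A (complex_of_real \<sigma> * k)"
      unfolding eigenvalue_def eigenvector_def using v A by auto
    hence "norm (complex_of_real \<sigma> * k) \<le> sr"
      using spectral_radius_mem_max(2)[OF A n] unfolding spectrum_def sr_def by auto
    hence "\<sigma> * norm k \<le> sr" using s0 by (simp add: norm_mult)
    thus ?thesis using s0 by (simp add: field_simps)
  qed
  have "spectral_radius A' < 1"
  proof -
    obtain k where "eigenvalue A' k" "spectral_radius A' = norm k"
      using spectral_radius_mem_max(1)[OF A' n] unfolding spectrum_def by auto
    with evA' have "spectral_radius A' \<le> sr / \<sigma>" by auto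
    also have "\<dots> < 1" using ss s0 by (simp add: field_simps)
    finally show ?thesis .
  qed
  then obtain c where c: "\<forall>k. norm_bound (A' ^\<^sub>m k) c"
    using spectral_radius_jnf_norm_bound_less_1_upper_triangular[OF A'] by blast
  have AA: "A = complex_of_real \<sigma> \<cdot>\<^sub>m A'" unfolding A'_def using s0 A
    by (auto intro!: eq_matI)
  show ?thesis
  proof (intro exI conjI allI)
    fix k
    show "norm_bound (A ^\<^sub>m k) (c * \<sigma> ^ k)"
      unfolding norm_bound_def
    proof (intro allI impI)
      fix i j assume ij: "i < dim_row (A ^\<^sub>m k)" "j < dim_col (A ^\<^sub>m k)"
      have eq: "A ^\<^sub>m k = (complex_of_real \<sigma>)^k \<cdot>\<^sub>m (A' ^\<^sub>m k)"
        by (subst AA, rule smult_pow_mat[OF A'])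
      have ij': "i < dim_row (A' ^\<^sub>m k)" "j < dim_col (A' ^\<^sub>m k)" using ij A A' by auto
      have "norm ((A ^\<^sub>m k) $$ (i,j)) = \<sigma>^k * norm ((A' ^\<^sub>m k) $$ (i,j))"
        using ij' s0 by (simp add: eq norm_mult norm_power)
      also have "\<dots> \<le> \<sigma>^k * c" using c ij' s0 unfolding norm_bound_def
        by (intro mult_left_mono) auto
      finally show "norm ((A ^\<^sub>m k) $$ (i,j)) \<le> c * \<sigma> ^ k" by (simp add: ac_simps)
    qed
  qed (use s0 s1 in auto)
qed


definition idx :: "'n::finite \<Rightarrow> nat" where
  "idx = (SOME f. bij_betw f (UNIV::'n set) {..<CARD('n)})"

definition ixi :: "nat \<Rightarrow> 'n::finite" where
  "ixi = inv_into UNIV idx"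

lemma idx_bij: "bij_betw (idx::'n::finite \<Rightarrow> nat) UNIV {..<CARD('n)}"
proof -
  have "\<exists>f. bij_betw f (UNIV::'n set) {..<CARD('n)}"
    using ex_bij_betw_finite_nat[of "UNIV::'n set"] by (auto simp: atLeast0LessThan)
  then show ?thesis unfolding idx_def by (rule someI_ex)
qed

lemma ixi_bij: "bij_betw (ixi::nat \<Rightarrow> 'n::finite) {..<CARD('n)} UNIV"
  unfolding ixi_def by (rule bij_betw_inv_into[OF idx_bij])

lemma idx_lt[simp]: "idx (p::'n::finite) < CARD('n)"
  using idx_bij[where 'n='n] unfolding bij_betw_def by auto

lemma ixi_idx[simp]: "ixi (idx (p::'n::finite)) = p"
  unfolding ixi_def using idx_bij[where 'n='n] by (simp add: bij_betw_def)

lemma idx_ixi[simp]: "i < CARD('n::finite) \<Longrightarrow> idx (ixi i :: 'n) = i"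
  unfolding ixi_def using idx_bij[where 'n='n]
  by (simp add: bij_betw_def f_inv_into_f)

definition tm :: "real^'n^'n \<Rightarrow> complex mat" where
  "tm M = Matrix.mat CARD('n) CARD('n) (\<lambda>(i,j). complex_of_real (M $ ixi i $ ixi j))"

definition tv :: "real^'n \<Rightarrow> complex Matrix.vec" where
  "tv v = Matrix.vec CARD('n) (\<lambda>i. complex_of_real (v $ ixi i))"

lemma tm_carrier[simp]: "tm (M::real^'n^'n) \<in> carrier_mat CARD('n) CARD('n)"
  unfolding tm_def by auto

lemma dim_tm[simp]: "dim_row (tm (M::real^'n^'n)) = CARD('n)" "dim_col (tm (M::real^'n^'n)) = CARD('n)"
  unfolding tm_def by auto

lemma dim_tv[simp]: "dim_vec (tv (v::real^'n)) = CARD('n)"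
  unfolding tv_def by auto

lemma tv_carrier[simp]: "tv (v::real^'n) \<in> carrier_vec CARD('n)"
  unfolding tv_def by auto

lemma sum_ixi: "(\<Sum>j<CARD('n::finite). g (ixi j :: 'n)) = (\<Sum>q\<in>UNIV. g q)"
  by (rule sum.reindex_bij_betw[OF ixi_bij])

lemma tv_mult: "tv (M *v v) = tm M *\<^sub>v tv (v::real^'n)"
proof (rule eq_vecI)
  show "dim_vec (tv (M *v v)) = dim_vec (tm M *\<^sub>v tv v)" by (simp add: tv_def tm_def)
  fix i assume "i < dim_vec (tm M *\<^sub>v tv v)"
  hence i: "i < CARD('n)" by (simp add: tm_def)
  have "(tm M *\<^sub>v tv v) $ i = (\<Sum>j<CARD('n). complex_of_real (M $ ixi i $ ixi j) * complex_of_real (v $ ixi j))"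
    using i by (simp add: tm_def tv_def scalar_prod_def atLeast0LessThan)
  also have "\<dots> = (\<Sum>q\<in>UNIV. complex_of_real (M $ ixi i $ q) * complex_of_real (v $ q))"
    by (rule sum_ixi)
  also have "\<dots> = complex_of_real ((M *v v) $ ixi i)"
    by (simp add: matrix_vector_mult_def)
  finally show "tv (M *v v) $ i = (tm M *\<^sub>v tv v) $ i" using i by (simp add: tv_def)
qed

lemma tv_pow: "tv (((*v) M ^^ k) v) = (tm M ^\<^sub>m k) *\<^sub>v tv (v::real^'n)"
proof (induction k arbitrary: v)
  case 0 then show ?case by simp
next
  case (Suc k)
  have "tv (((*v) M ^^ Suc k) v) = tv (((*v) M ^^ k) (M *v v))" by (simp only: funpow_Suc_right o_apply)
  also have "\<dots> = (tm M ^\<^sub>m k) *\<^sub>v tv (M *v v)" by (rule Suc.IH)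
  also have "\<dots> = (tm M ^\<^sub>m k) *\<^sub>v (tm M *\<^sub>v tv v)" by (simp only: tv_mult)
  also have "\<dots> = (tm M ^\<^sub>m k * tm M) *\<^sub>v tv v"
    by (rule assoc_mult_mat_vec[symmetric]) auto
  finally show ?case by simp
qed

lemma tm_eigen: assumes "eigenvalue (tm (M::real^'n^'n)) lam" shows "is_eigenvalue M lam"
proof -
  have d: "dim_row (tm M) = CARD('n)" by (simp add: tm_def)
  obtain v where v: "v \<in> carrier_vec CARD('n)" "v \<noteq> 0\<^sub>v CARD('n)" "tm M *\<^sub>v v = lam \<cdot>\<^sub>v v"
    using assms unfolding eigenvalue_def eigenvector_def d by blast
  define w :: "complex^'n" where "w = (\<chi> p. v $ idx p)"
  obtain j where j: "j < CARD('n)" "v $ j \<noteq> 0"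
    using v(1,2) by (metis carrier_vecD eq_vecI index_zero_vec(1) index_zero_vec(2))
  have "w $ ixi j \<noteq> 0" using j by (simp add: w_def)
  hence w0: "w \<noteq> 0" by auto
  have "\<forall>p. (cmat M *v w) $ p = (lam *s w) $ p"
  proof
    fix p :: 'n
    have "(tm M *\<^sub>v v) $ idx p = (\<Sum>j<CARD('n). complex_of_real (M $ p $ ixi j) * v $ j)"
      using v(1) by (simp add: tm_def scalar_prod_def atLeast0LessThan)
    also have "\<dots> = (\<Sum>j<CARD('n). complex_of_real (M $ p $ ixi j) * v $ idx (ixi j :: 'n))"
      by (rule sum.cong) auto
    also have "\<dots> = (\<Sum>q\<in>UNIV. complex_of_real (M $ p $ q) * v $ idx q)"
      by (rule sum_ixi)
    finally have "(\<Sum>q\<in>UNIV. complex_of_real (M $ p $ q) * v $ idx q) = lam * v $ idx p"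
      using v(1,3) by simp
    thus "(cmat M *v w) $ p = (lam *s w) $ p"
      by (simp add: matrix_vector_mult_def cmat_def w_def)
  qed
  hence "cmat M *v w = lam *s w" by (simp add: Finite_Cartesian_Product.vec_eq_iff)
  thus ?thesis unfolding is_eigenvalue_def using w0 by blast
qed

lemma norm_pow_bound:
  assumes nb: "norm_bound (tm (M::real^'n^'n) ^\<^sub>m k) b"
  shows "norm (((*v) M ^^ k) v) \<le> real CARD('n) * real CARD('n) * b * norm v"
proof -
  let ?n = "CARD('n)"
  let ?P = "tm M ^\<^sub>m k"
  have P: "?P \<in> carrier_mat ?n ?n" by simp
  have b0: "0 \<le> b" using nb P unfolding norm_bound_def
    by (metis carrier_matD(1) carrier_matD(2) norm_ge_zero order_trans zero_less_card_finite)
  have comp: "\<bar>(((*v) M ^^ k) v) $ p\<bar> \<le> real ?n * b * norm v" for p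
  proof -
    have "complex_of_real ((((*v) M ^^ k) v) $ p) = tv (((*v) M ^^ k) v) $ idx p"
      by (simp add: tv_def)
    also have "\<dots> = (\<Sum>j<?n. ?P $$ (idx p, j) * tv v $ j)"
      unfolding tv_pow using P by (simp add: scalar_prod_def atLeast0LessThan)
    finally have eq: "\<bar>(((*v) M ^^ k) v) $ p\<bar> = norm (\<Sum>j<?n. ?P $$ (idx p, j) * tv v $ j)"
      by (metis norm_of_real)
    also have "\<dots> \<le> (\<Sum>j<?n. norm (?P $$ (idx p, j) * tv v $ j))" by (rule norm_sum)
    also have "\<dots> \<le> (\<Sum>j<?n. b * norm v)"
    proof (rule sum_mono)
      fix j assume "j \<in> {..<?n}"
      hence j: "j < ?n" by simp
      have "norm (?P $$ (idx p, j)) \<le> b" using nb P j unfolding norm_bound_def by auto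
      moreover have "norm (tv v $ j) \<le> norm v" using j by (simp add: tv_def component_le_norm_cart)
      ultimately show "norm (?P $$ (idx p, j) * tv v $ j) \<le> b * norm v"
        unfolding norm_mult using b0 by (intro mult_mono) auto
    qed
    finally show ?thesis by simp
  qed
  have "norm (((*v) M ^^ k) v) \<le> (\<Sum>p\<in>UNIV. \<bar>(((*v) M ^^ k) v) $ p\<bar>)" by (rule norm_le_l1_cart)
  also have "\<dots> \<le> (\<Sum>p\<in>(UNIV::'n set). real ?n * b * norm v)" by (rule sum_mono) (rule comp)
  finally show ?thesis by simp
qed

lemma R1:
  assumes "\<And>lam. is_eigenvalue (M::real^'n^'n) lam \<Longrightarrow> cmod lam \<le> 1"
  shows "\<exists>c d. \<forall>k v. norm (((*v) M ^^ k) v) \<le> c * (real k + 1) ^ d * norm v"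
proof -
  have ev: "\<And>k. eigenvalue (tm M) k \<Longrightarrow> cmod k \<le> 1" using assms tm_eigen by blast
  obtain c where c: "\<forall>k. norm_bound (tm M ^\<^sub>m k) (c * (real k + 1) ^ (CARD('n) - 1))"
    using J_le1[OF tm_carrier zero_less_card_finite ev] by blast
  show ?thesis
    by (rule exI[of _ "real CARD('n) * real CARD('n) * c"], rule exI[of _ "CARD('n) - 1"])
       (use norm_pow_bound[OF c[rule_format]] in \<open>simp add: ac_simps\<close>)
qed

lemma R2:
  assumes "schur_stable (M::real^'n^'n)"
  shows "\<exists>c \<sigma>. 0 < \<sigma> \<and> \<sigma> < 1 \<and> (\<forall>k v. norm (((*v) M ^^ k) v) \<le> c * \<sigma> ^ k * norm v)"
proof -
  have ev: "\<And>k. eigenvalue (tm M) k \<Longrightarrow> cmod k < 1" using assms tm_eigen unfolding schur_stable_def by blast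
  obtain c \<sigma> where c: "0 < \<sigma>" "\<sigma> < 1" "\<forall>k. norm_bound (tm M ^\<^sub>m k) (c * \<sigma> ^ k)"
    using J_lt1[OF tm_carrier zero_less_card_finite ev] by blast
  show ?thesis
    by (rule exI[of _ "real CARD('n) * real CARD('n) * c"], rule exI[of _ \<sigma>])
       (use c norm_pow_bound[OF c(3)[rule_format]] in \<open>simp add: ac_simps\<close>)
qed

primrec dpow :: "nat \<Rightarrow> (nat \<Rightarrow> nat \<Rightarrow> real) \<Rightarrow> nat \<Rightarrow> nat \<Rightarrow> nat \<Rightarrow> real" where
  "dpow N d 0 i j = (if i = j then 1 else 0)"
| "dpow N d (Suc k) i j = (\<Sum>l<N. d i l * dpow N d k l j)"

context
  fixes N :: nat and d :: "nat \<Rightarrow> nat \<Rightarrow> real"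
  assumes dnn: "\<And>i j. i < N \<Longrightarrow> j < N \<Longrightarrow> 0 \<le> d i j"
    and drs: "\<And>i. i < N \<Longrightarrow> (\<Sum>j<N. d i j) = 1"
begin

lemma dpow_nn: "i < N \<Longrightarrow> j < N \<Longrightarrow> 0 \<le> dpow N d k i j"
proof (induction k arbitrary: i)
  case 0 then show ?case by simp
next
  case (Suc k) then show ?case by (auto intro!: sum_nonneg mult_nonneg_nonneg dnn)
qed

lemma dpow_rs: "i < N \<Longrightarrow> (\<Sum>j<N. dpow N d k i j) = 1"
proof (induction k arbitrary: i)
  case 0 then show ?case by simp
next
  case (Suc k)
  have "(\<Sum>j<N. dpow N d (Suc k) i j) = (\<Sum>j<N. \<Sum>l<N. d i l * dpow N d k l j)" by simp
  also have "\<dots> = (\<Sum>l<N. \<Sum>j<N. d i l * dpow N d k l j)" by (rule sum.swap)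
  also have "\<dots> = (\<Sum>l<N. d i l * (\<Sum>j<N. dpow N d k l j))" by (simp add: sum_distrib_left)
  also have "\<dots> = (\<Sum>l<N. d i l)" using Suc.IH by simp
  finally show ?case using drs Suc.prems by simp
qed

lemma dpow_add: "i < N \<Longrightarrow> dpow N d (m + s) i j = (\<Sum>l<N. dpow N d m i l * dpow N d s l j)"
proof (induction m arbitrary: i)
  case 0
  have "(\<Sum>l<N. dpow N d 0 i l * dpow N d s l j) = (\<Sum>l<N. if l = i then dpow N d s l j else 0)"
    by (rule sum.cong) auto
  also have "\<dots> = dpow N d s i j" using 0 by simp
  finally show ?case by simp
next
  case (Suc m)
  have "dpow N d (Suc m + s) i j = (\<Sum>q<N. d i q * dpow N d (m + s) q j)" by simp
  also have "\<dots> = (\<Sum>q<N. d i q * (\<Sum>l<N. dpow N d m q l * dpow N d s l j))"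
    using Suc.IH by simp
  also have "\<dots> = (\<Sum>q<N. \<Sum>l<N. d i q * dpow N d m q l * dpow N d s l j)"
    by (simp add: sum_distrib_left mult.assoc)
  also have "\<dots> = (\<Sum>l<N. \<Sum>q<N. d i q * dpow N d m q l * dpow N d s l j)" by (rule sum.swap)
  also have "\<dots> = (\<Sum>l<N. dpow N d (Suc m) i l * dpow N d s l j)"
    by (simp add: sum_distrib_right)
  finally show ?case .
qed

lemma dpow_root:
  assumes r: "r < N" and par: "\<And>i. i < N \<Longrightarrow> i \<noteq> r \<Longrightarrow> par i < N \<and> \<beta> \<le> d i (par i)"
    and rr: "\<beta> \<le> d r r" and b0: "0 \<le> \<beta>"
  shows "i < N \<Longrightarrow> (par ^^ k) i = r \<Longrightarrow> k \<le> m \<Longrightarrow> \<beta> ^ m \<le> dpow N d m i r"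
proof (induction m arbitrary: i k)
  case 0 then show ?case by simp
next
  case (Suc m)
  show ?case
  proof (cases "i = r")
    case True
    have "\<beta> ^ m \<le> dpow N d m r r" using Suc.IH[of r 0] r by simp
    hence "\<beta> * \<beta> ^ m \<le> d r r * dpow N d m r r"
      using rr b0 by (intro mult_mono) (auto intro: dnn r)
    also have "\<dots> \<le> (\<Sum>l<N. d r l * dpow N d m l r)"
      by (rule member_le_sum[where f="\<lambda>l. d r l * dpow N d m l r"])
         (use r in \<open>auto intro!: mult_nonneg_nonneg dnn dpow_nn\<close>)
    finally show ?thesis using True by simp
  next
    case False
    obtain k' where k: "k = Suc k'" using False Suc.prems by (cases k) auto
    have p: "par i < N" "\<beta> \<le> d i (par i)" using par[OF Suc.prems(1) False] by auto
    have "(par ^^ k') (par i) = (par ^^ Suc k') i" by (simp only: funpow_Suc_right o_apply)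
    hence "(par ^^ k') (par i) = r" using Suc.prems(2) k by simp
    hence "\<beta> ^ m \<le> dpow N d m (par i) r" using Suc.IH[of "par i" k'] p Suc.prems k by simp
    hence "\<beta> * \<beta> ^ m \<le> d i (par i) * dpow N d m (par i) r"
      using p b0 by (intro mult_mono) (auto intro: dnn Suc.prems)
    also have "\<dots> \<le> (\<Sum>l<N. d i l * dpow N d m l r)"
      by (rule member_le_sum[where f="\<lambda>l. d i l * dpow N d m l r"])
         (use r p Suc.prems in \<open>auto intro!: mult_nonneg_nonneg dnn dpow_nn\<close>)
    finally show ?thesis by simp
  qed
qed

lemma dpow_interval:
  assumes r: "r < N" and L: "0 < L" and g0: "0 \<le> \<gamma>" and g1: "\<gamma> \<le> 1"
    and Pr: "\<And>i. i < N \<Longrightarrow> \<gamma> \<le> dpow N d L i r" and j: "j < N"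
  shows "\<exists>lo hi. hi - lo \<le> (1 - \<gamma>) ^ (s div L) \<and> (\<forall>i<N. lo \<le> dpow N d s i j \<and> dpow N d s i j \<le> hi)"
proof (induction s rule: less_induct)
  case (less s)
  show ?case
  proof (cases "s < L")
    case True
    have "\<forall>i<N. 0 \<le> dpow N d s i j \<and> dpow N d s i j \<le> 1"
    proof (intro allI impI conjI)
      fix i assume i: "i < N"
      show "0 \<le> dpow N d s i j" using i j by (rule dpow_nn)
      have "dpow N d s i j \<le> (\<Sum>l<N. dpow N d s i l)"
        by (rule member_le_sum[where f="\<lambda>l. dpow N d s i l"]) (use i j in \<open>auto intro: dpow_nn\<close>)
      thus "dpow N d s i j \<le> 1" using dpow_rs[OF i] by simp
    qed
    thus ?thesis using True by (intro exI[of _ 0] exI[of _ 1]) auto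
  next
    case False
    define s' where "s' = s - L"
    have ss: "s = L + s'" using False by (simp add: s'_def)
    have "s' < s" using L ss by simp
    from less.IH[OF this] obtain lo hi where lh: "hi - lo \<le> (1 - \<gamma>) ^ (s' div L)"
      "\<forall>i<N. lo \<le> dpow N d s' i j \<and> dpow N d s' i j \<le> hi" by blast
    define y where "y = (\<lambda>l. dpow N d s' l j)"
    have yb: "lo \<le> y l" "y l \<le> hi" if "l < N" for l using lh(2) that by (auto simp: y_def)
    have sdiv: "s div L = Suc (s' div L)" using L ss by simp
    define lo' where "lo' = lo + \<gamma> * (y r - lo)"
    define hi' where "hi' = hi - \<gamma> * (hi - y r)"
    have bnd: "lo' \<le> dpow N d s i j \<and> dpow N d s i j \<le> hi'" if i: "i < N" for i
    proof -
      have eq: "dpow N d s i j = (\<Sum>l<N. dpow N d L i l * y l)"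
        unfolding ss y_def by (rule dpow_add[OF i])
      have rs: "(\<Sum>l<N. dpow N d L i l) = 1" by (rule dpow_rs[OF i])
      have "dpow N d s i j - lo = (\<Sum>l<N. dpow N d L i l * (y l - lo))"
        unfolding eq using rs by (simp add: algebra_simps sum_subtractf sum_distrib_left[symmetric])
      also have "\<dots> \<ge> dpow N d L i r * (y r - lo)"
        by (rule member_le_sum[where f="\<lambda>l. dpow N d L i l * (y l - lo)"])
           (use r i yb in \<open>auto intro!: mult_nonneg_nonneg dpow_nn\<close>)
      moreover have "dpow N d L i r * (y r - lo) \<ge> \<gamma> * (y r - lo)"
        using Pr[OF i] yb[OF r] by (intro mult_right_mono) auto
      ultimately have A1: "lo' \<le> dpow N d s i j" unfolding lo'_def by linarith
      have "hi - dpow N d s i j = (\<Sum>l<N. dpow N d L i l * (hi - y l))"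
        unfolding eq using rs by (simp add: algebra_simps sum_subtractf sum_distrib_left[symmetric])
      also have "\<dots> \<ge> dpow N d L i r * (hi - y r)"
        by (rule member_le_sum[where f="\<lambda>l. dpow N d L i l * (hi - y l)"])
           (use r i yb in \<open>auto intro!: mult_nonneg_nonneg dpow_nn\<close>)
      moreover have "dpow N d L i r * (hi - y r) \<ge> \<gamma> * (hi - y r)"
        using Pr[OF i] yb[OF r] by (intro mult_right_mono) auto
      ultimately have A2: "dpow N d s i j \<le> hi'" unfolding hi'_def by linarith
      show ?thesis using A1 A2 by simp
    qed
    have "hi' - lo' = (1 - \<gamma>) * (hi - lo)" unfolding hi'_def lo'_def by (simp add: algebra_simps)
    also have "\<dots> \<le> (1 - \<gamma>) * (1 - \<gamma>) ^ (s' div L)" using lh(1) g1 by (intro mult_left_mono) auto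
    also have "\<dots> = (1 - \<gamma>) ^ (s div L)" using sdiv by simp
    finally show ?thesis using bnd by blast
  qed
qed

end

lemma pow_div_bound:
  assumes q0: "0 < q" and q1: "q < 1" and L: "0 < L"
  shows "q ^ (s div L) \<le> (1 / q) * root L q ^ s"
proof -
  define \<rho> where "\<rho> = root L q"
  have r0: "0 < \<rho>" using q0 L by (simp add: \<rho>_def)
  have r1: "\<rho> \<le> 1" using q0 q1 L by (simp add: \<rho>_def)
  have rL: "\<rho> ^ L = q" using q0 L by (simp add: \<rho>_def real_root_pow_pos2)
  have "\<rho> ^ s = \<rho> ^ (L * (s div L) + s mod L)" by simp
  also have "\<dots> = q ^ (s div L) * \<rho> ^ (s mod L)" by (simp only: power_add power_mult rL)
  finally have eq: "\<rho> ^ s = q ^ (s div L) * \<rho> ^ (s mod L)" .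
  have "\<rho> ^ L \<le> \<rho> ^ (s mod L)" using r0 r1 L by (intro power_decreasing) (auto intro: less_imp_le)
  hence "q ^ (s div L) * q \<le> \<rho> ^ s" unfolding eq rL using q0 by (intro mult_left_mono) auto
  thus ?thesis using q0 by (simp add: \<rho>_def field_simps)
qed


lemma poly_geo_lim:
  assumes t0: "0 < \<tau>" and t1: "\<tau> < 1"
  shows "(\<lambda>k. C * ((real k + 1) ^ D * \<tau> ^ k)) \<longlonglongrightarrow> 0"
proof -
  define R where "R = (1 + \<tau>) / (2 * \<tau>)"
  have R1: "1 < R" using t0 t1 by (simp add: R_def field_simps)
  have h: "(\<lambda>x. 1 / (real x + 1)) \<longlonglongrightarrow> 0"
    using LIMSEQ_inverse_real_of_nat by (simp add: inverse_eq_divide add.commute)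
  have "(\<lambda>k. (1 + 1 / (real k + 1)) ^ D) \<longlonglongrightarrow> (1 + 0) ^ D"
    by (intro tendsto_intros h)
  hence "(\<lambda>k. (1 + 1 / (real k + 1)) ^ D) \<longlonglongrightarrow> 1" by simp
  hence "eventually (\<lambda>k. (1 + 1 / (real k + 1)) ^ D < R) sequentially"
    using R1 by (rule order_tendstoD)
  then obtain N0 where N0: "\<And>k. k \<ge> N0 \<Longrightarrow> (1 + 1 / (real k + 1)) ^ D < R"
    unfolding eventually_sequentially by blast
  have "summable (\<lambda>k. (real k + 1) ^ D * \<tau> ^ k)"
  proof (rule summable_ratio_test[where c = "(1 + \<tau>) / 2" and N = N0])
    show "(1 + \<tau>) / 2 < 1" using t1 by simp
    fix k assume k: "k \<ge> N0"
    have eq: "real (Suc k) + 1 = (real k + 1) * (1 + 1 / (real k + 1))" by (simp add: field_simps)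
    have "norm ((real (Suc k) + 1) ^ D * \<tau> ^ Suc k) = (1 + 1 / (real k + 1)) ^ D * \<tau> * ((real k + 1) ^ D * \<tau> ^ k)"
      using t0 unfolding eq by (simp add: power_mult_distrib ac_simps)
    also have "\<dots> \<le> R * \<tau> * ((real k + 1) ^ D * \<tau> ^ k)"
      using N0[OF k] t0 by (intro mult_right_mono) auto
    also have "R * \<tau> = (1 + \<tau>) / 2" using t0 by (simp add: R_def field_simps)
    finally show "norm ((real (Suc k) + 1) ^ D * \<tau> ^ Suc k) \<le> (1 + \<tau>) / 2 * norm ((real k + 1) ^ D * \<tau> ^ k)"
      using t0 by simp
  qed
  hence "(\<lambda>k. (real k + 1) ^ D * \<tau> ^ k) \<longlonglongrightarrow> 0" by (rule summable_LIMSEQ_zero)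
  thus ?thesis by (rule tendsto_mult_right_zero)
qed

lemma conv_bound:
  fixes a b \<mu> :: real
  assumes a0: "0 \<le> a" and b0: "0 \<le> b" and m0: "0 < \<mu>" and am: "a \<le> \<mu>" and bm: "b \<le> \<mu>"
  shows "(\<Sum>t<k. a ^ (k - 1 - t) * ((real t + 1) ^ D * b ^ t)) \<le> (1/\<mu>) * ((real k + 1) ^ (Suc D) * \<mu> ^ k)"
proof -
  have "(\<Sum>t<k. a ^ (k - 1 - t) * ((real t + 1) ^ D * b ^ t)) \<le> (\<Sum>t<k. (real k + 1) ^ D * \<mu> ^ (k - 1))"
  proof (rule sum_mono)
    fix t assume "t \<in> {..<k}"
    hence t: "t < k" by simp
    have "a ^ (k - 1 - t) * b ^ t \<le> \<mu> ^ (k - 1 - t) * \<mu> ^ t"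
      using a0 b0 am bm by (intro mult_mono power_mono) auto
    also have "\<dots> = \<mu> ^ (k - 1)" using t by (simp add: power_add[symmetric])
    finally have 1: "a ^ (k - 1 - t) * b ^ t \<le> \<mu> ^ (k - 1)" .
    have 2: "(real t + 1) ^ D \<le> (real k + 1) ^ D" using t by (intro power_mono) auto
    have "a ^ (k - 1 - t) * ((real t + 1) ^ D * b ^ t) = (real t + 1) ^ D * (a ^ (k - 1 - t) * b ^ t)"
      by simp
    also have "\<dots> \<le> (real k + 1) ^ D * \<mu> ^ (k - 1)"
      using 1 2 a0 b0 by (intro mult_mono) auto
    finally show "a ^ (k - 1 - t) * ((real t + 1) ^ D * b ^ t) \<le> (real k + 1) ^ D * \<mu> ^ (k - 1)" .
  qed
  also have "\<dots> = real k * ((real k + 1) ^ D * \<mu> ^ (k - 1))" by simp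
  also have "\<dots> \<le> (1/\<mu>) * ((real k + 1) ^ (Suc D) * \<mu> ^ k)"
  proof (cases k)
    case 0 then show ?thesis using m0 by simp
  next
    case (Suc k')
    have "real k * ((real k + 1) ^ D * \<mu> ^ (k - 1)) \<le> (real k + 1) * ((real k + 1) ^ D * \<mu> ^ k')"
      using m0 Suc by (simp add: mult_right_mono less_imp_le)
    also have "\<dots> = (1/\<mu>) * ((real k + 1) ^ (Suc D) * \<mu> ^ k)" using m0 Suc by (simp add: field_simps)
    finally show ?thesis .
  qed
  finally show ?thesis .
qed

lemma dmat_nn:
  assumes "weighted_digraph N a" "i < N" "j < N"
  shows "0 \<le> dmat N a i j"
proof -
  have "0 \<le> din N a i" using assms unfolding din_def weighted_digraph_def by (auto intro: sum_nonneg)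
  thus ?thesis using assms unfolding dmat_def weighted_digraph_def by auto
qed

lemma dmat_rs:
  assumes wd: "weighted_digraph N a" and i: "i < N"
  shows "(\<Sum>j<N. dmat N a i j) = 1"
proof -
  have d0: "0 \<le> din N a i" using assms unfolding din_def weighted_digraph_def by (auto intro: sum_nonneg)
  have aii: "a i i = 0" using assms unfolding weighted_digraph_def by auto
  have "(\<Sum>j<N. dmat N a i j) = (\<Sum>j<N. (a i j + (if j = i then 1 else 0)) / (1 + din N a i))"
    by (rule sum.cong) (auto simp: dmat_def aii)
  also have "\<dots> = (\<Sum>j<N. a i j + (if j = i then 1 else 0)) / (1 + din N a i)"
    by (rule sum_divide_distrib[symmetric])
  also have "(\<Sum>j<N. a i j + (if j = i then 1 else 0)) = din N a i + 1"
    using i by (simp add: sum.distrib din_def)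
  finally show ?thesis using d0 by simp
qed

lemma consensus:
  assumes wd: "weighted_digraph N a" and st: "has_spanning_tree N a"
  shows "\<exists>c \<rho>. 0 \<le> c \<and> 0 < \<rho> \<and> \<rho> < 1 \<and> (\<forall>s i m j. i < N \<longrightarrow> m < N \<longrightarrow> j < N \<longrightarrow>
           \<bar>dpow N (dmat N a) s i j - dpow N (dmat N a) s m j\<bar> \<le> c * \<rho> ^ s)"
proof -
  let ?d = "dmat N a"
  have dnn: "\<And>i j. i < N \<Longrightarrow> j < N \<Longrightarrow> 0 \<le> ?d i j" using dmat_nn[OF wd] by blast
  have drs: "\<And>i. i < N \<Longrightarrow> (\<Sum>j<N. ?d i j) = 1" using dmat_rs[OF wd] by blast
  obtain r par where r: "r < N" and par: "\<forall>i<N. i \<noteq> r \<longrightarrow> par i < N \<and> a i (par i) > 0"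
    and reach: "\<forall>i<N. \<exists>k. (par ^^ k) i = r"
    using st unfolding has_spanning_tree_def by blast
  have din0: "\<And>i. i < N \<Longrightarrow> 0 \<le> din N a i" using wd unfolding din_def weighted_digraph_def by (auto intro: sum_nonneg)
  define f where "f = (\<lambda>i. if i = r then ?d r r else ?d i (par i))"
  define \<beta> where "\<beta> = Min (f ` {..<N})"
  have fpos: "0 < f i" if "i < N" for i
  proof (cases "i = r")
    case True then show ?thesis using din0[OF r] by (simp add: f_def dmat_def)
  next
    case False
    then show ?thesis using par that din0[OF that] by (auto simp: f_def dmat_def)
  qed
  have b0: "0 < \<beta>" unfolding \<beta>_def using r fpos by (subst Min_gr_iff) auto
  have bf: "\<beta> \<le> f i" if "i < N" for i unfolding \<beta>_def using that by (intro Min_le) auto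
  have parb: "par i < N \<and> \<beta> \<le> ?d i (par i)" if "i < N" "i \<noteq> r" for i
    using par that bf[OF that(1)] by (auto simp: f_def)
  have rrb: "\<beta> \<le> ?d r r" using bf[OF r] by (simp add: f_def)
  define kf where "kf = (\<lambda>i. SOME k. (par ^^ k) i = r)"
  have kf: "(par ^^ kf i) i = r" if "i < N" for i
    unfolding kf_def using reach that by (metis (mono_tags, lifting) someI_ex)
  define L where "L = Suc (\<Sum>i<N. kf i)"
  have kfL: "kf i \<le> L" if "i < N" for i
  proof -
    have "kf i \<le> (\<Sum>i<N. kf i)" by (rule member_le_sum) (use that in auto)
    thus ?thesis by (simp add: L_def)
  qed
  have L0: "0 < L" by (simp add: L_def)
  have PL: "\<beta> ^ L \<le> dpow N ?d L i r" if "i < N" for i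
    using dpow_root[OF dnn drs r parb rrb _ that kf[OF that] kfL[OF that]] b0 by auto
  define \<gamma> where "\<gamma> = min (\<beta> ^ L) (1/2)"
  have g0: "0 < \<gamma>" and g1: "\<gamma> \<le> 1/2" using b0 by (auto simp: \<gamma>_def)
  have Pg: "\<gamma> \<le> dpow N ?d L i r" if "i < N" for i using PL[OF that] by (simp add: \<gamma>_def)
  define q where "q = 1 - \<gamma>"
  have q0: "0 < q" and q1: "q < 1" using g0 g1 by (auto simp: q_def)
  define \<rho> where "\<rho> = root L q"
  have r0: "0 < \<rho>" and r1: "\<rho> < 1" using q0 q1 L0 by (auto simp: \<rho>_def)
  show ?thesis
  proof (intro exI conjI allI impI)
    fix s i m j assume i: "i < N" and m: "m < N" and j: "j < N"
    obtain lo hi where lh: "hi - lo \<le> q ^ (s div L)"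
      "\<forall>i<N. lo \<le> dpow N ?d s i j \<and> dpow N ?d s i j \<le> hi"
      using dpow_interval[OF dnn drs r L0 _ _ Pg j, of s] g0 g1 unfolding q_def by auto
    have "lo \<le> dpow N ?d s i j" "dpow N ?d s i j \<le> hi" "lo \<le> dpow N ?d s m j" "dpow N ?d s m j \<le> hi"
      using lh(2) i m by auto
    hence "\<bar>dpow N ?d s i j - dpow N ?d s m j\<bar> \<le> hi - lo" by (simp add: abs_le_iff)
    also have "\<dots> \<le> q ^ (s div L)" by (rule lh(1))
    also have "\<dots> \<le> (1/q) * \<rho> ^ s" unfolding \<rho>_def by (rule pow_div_bound[OF q0 q1 L0])
    finally show "\<bar>dpow N ?d s i j - dpow N ?d s m j\<bar> \<le> (1/q) * \<rho> ^ s" .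
  qed (use q0 r0 r1 in auto)
qed


lemma mv_sum: "(M::real^'n^'m) *v sum f S = (\<Sum>j\<in>S. M *v f j)"
  by (induction S rule: infinite_finite_induct) (simp_all add: matrix_vector_right_distrib)

lemma mv_neg: "(M::real^'n^'m) *v (- v) = - (M *v v)"
  using matrix_vector_mult_diff_distrib[of M 0 v] by simp

lemma dsum_step:
  fixes X :: "nat \<Rightarrow> 'a::real_vector"
  shows "(\<Sum>l<N. d i l *\<^sub>R (\<Sum>j<N. dpow N d m l j *\<^sub>R X j)) = (\<Sum>j<N. dpow N d (Suc m) i j *\<^sub>R X j)"
proof -
  have "(\<Sum>l<N. d i l *\<^sub>R (\<Sum>j<N. dpow N d m l j *\<^sub>R X j)) = (\<Sum>l<N. \<Sum>j<N. (d i l * dpow N d m l j) *\<^sub>R X j)"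
    by (simp add: scaleR_sum_right)
  also have "\<dots> = (\<Sum>j<N. \<Sum>l<N. (d i l * dpow N d m l j) *\<^sub>R X j)" by (rule sum.swap)
  also have "\<dots> = (\<Sum>j<N. dpow N d (Suc m) i j *\<^sub>R X j)" by (simp add: scaleR_sum_left)
  finally show ?thesis .
qed

lemma abs_bound_nonneg:
  assumes "\<And>k v. norm (f k v) \<le> c * g k * norm v" "\<And>k. 0 \<le> g k"
  shows "norm (f k v) \<le> \<bar>c\<bar> * g k * norm v"
proof -
  have "c * g k * norm v \<le> \<bar>c\<bar> * g k * norm v"
    using assms(2)[of k] by (intro mult_right_mono) auto
  thus ?thesis using assms(1)[of k v] by linarith
qed

lemma main_sync:
  fixes A :: "real^'n^'n" and B :: "real^'m^'n" and C :: "real^'n^'p"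
    and K :: "real^'n^'m" and H :: "real^'p^'n"
    and N :: nat and a :: "nat \<Rightarrow> nat \<Rightarrow> real"
    and x :: "nat \<Rightarrow> nat \<Rightarrow> real^'n" and eta :: "nat \<Rightarrow> nat \<Rightarrow> real^'n"
    and xh :: "nat \<Rightarrow> nat \<Rightarrow> real^'n" and u :: "nat \<Rightarrow> nat \<Rightarrow> real^'m"
  assumes eigA: "\<And>lam. is_eigenvalue A lam \<Longrightarrow> cmod lam \<le> 1"
    and K: "schur_stable (A - B ** K)" and H: "schur_stable (A - H ** C)"
    and hyp: "N \<ge> 2 \<and> weighted_digraph N a \<and> has_spanning_tree N a \<and>
     (\<forall>k. \<forall>i<N.
        x (Suc k) i = A *v x k i + B *v u k i \<and>
        eta (Suc k) i = A *v eta k i + B *v u k i + A *v xh k i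
             - A *v (\<Sum>j<N. dmat N a i j *\<^sub>R (eta k i - eta k j)) \<and>
        xh (Suc k) i = A *v xh k i - (B ** K) *v (\<Sum>j<N. dmat N a i j *\<^sub>R (eta k i - eta k j))
             + H *v ((\<Sum>j<N. dmat N a i j *\<^sub>R (C *v x k i - C *v x k j)) - C *v xh k i) \<and>
        u k i = - (K *v eta k i))"
  shows "\<forall>i<N. \<forall>j<N. (\<lambda>k. x k i - x k j) \<longlonglongrightarrow> 0"
proof -
  define d where "d = dmat N a"
  have wd: "weighted_digraph N a" and st: "has_spanning_tree N a" using hyp by auto
  have dx: "\<And>k i. i < N \<Longrightarrow> x (Suc k) i = A *v x k i + B *v u k i" using hyp by blast
  have deta: "\<And>k i. i < N \<Longrightarrow> eta (Suc k) i = A *v eta k i + B *v u k i + A *v xh k i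
             - A *v (\<Sum>j<N. d i j *\<^sub>R (eta k i - eta k j))" using hyp unfolding d_def by blast
  have dxh: "\<And>k i. i < N \<Longrightarrow> xh (Suc k) i = A *v xh k i - (B ** K) *v (\<Sum>j<N. d i j *\<^sub>R (eta k i - eta k j))
             + H *v ((\<Sum>j<N. d i j *\<^sub>R (C *v x k i - C *v x k j)) - C *v xh k i)" using hyp unfolding d_def by blast
  have du: "\<And>k i. i < N \<Longrightarrow> u k i = - (K *v eta k i)" using hyp by blast
  have dnn: "\<And>i j. i < N \<Longrightarrow> j < N \<Longrightarrow> 0 \<le> d i j" using dmat_nn[OF wd] unfolding d_def by blast
  have drs: "\<And>i. i < N \<Longrightarrow> (\<Sum>j<N. d i j) = 1" using dmat_rs[OF wd] unfolding d_def by blast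

  define zh where "zh k i = (\<Sum>j<N. d i j *\<^sub>R (eta k i - eta k j))" for k i
  define xt where "xt k i = (\<Sum>j<N. d i j *\<^sub>R (x k i - x k j))" for k i
  define e where "e k i = xt k i - xh k i" for k i
  define w where "w k i = x k i - eta k i" for k i

  have xS: "x (Suc k) i = A *v x k i - (B ** K) *v eta k i" if i: "i < N" for k i
    using dx[OF i] du[OF i] by (simp add: mv_neg matrix_vector_mul_assoc)
  have xtS: "xt (Suc k) i = A *v xt k i - (B ** K) *v zh k i" if i: "i < N" for k i
  proof -
    have "xt (Suc k) i = (\<Sum>j<N. d i j *\<^sub>R ((A *v x k i - (B ** K) *v eta k i) - (A *v x k j - (B ** K) *v eta k j)))"
      unfolding xt_def using xS i by (intro sum.cong) auto
    also have "\<dots> = (\<Sum>j<N. A *v (d i j *\<^sub>R (x k i - x k j)) - (B ** K) *v (d i j *\<^sub>R (eta k i - eta k j)))"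
      by (intro sum.cong) (auto simp: algebra_simps)
    also have "\<dots> = A *v xt k i - (B ** K) *v zh k i"
      unfolding xt_def zh_def by (simp add: mv_sum sum_subtractf)
    finally show ?thesis .
  qed
  have zeta: "(\<Sum>j<N. d i j *\<^sub>R (C *v x k i - C *v x k j)) = C *v xt k i" for k i
    unfolding xt_def by (simp add: mv_sum algebra_simps)
  have eS: "e (Suc k) i = (A - H ** C) *v e k i" if i: "i < N" for k i
  proof -
    have "e (Suc k) i = (A *v xt k i - (B ** K) *v zh k i) - (A *v xh k i - (B ** K) *v zh k i
             + H *v (C *v xt k i - C *v xh k i))"
      unfolding e_def xtS[OF i] dxh[OF i] zeta zh_def ..
    also have "\<dots> = (A - H ** C) *v (xt k i - xh k i)"
      by (simp add: algebra_simps matrix_vector_mul_assoc)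
    finally show ?thesis unfolding e_def .
  qed
  have wS: "w (Suc k) i = A *v ((\<Sum>j<N. d i j *\<^sub>R w k j) + e k i)" if i: "i < N" for k i
  proof -
    have sw: "xt k i - zh k i = w k i - (\<Sum>j<N. d i j *\<^sub>R w k j)"
    proof -
      have "xt k i - zh k i = (\<Sum>j<N. d i j *\<^sub>R (w k i - w k j))"
        unfolding xt_def zh_def w_def by (simp add: sum_subtractf[symmetric] algebra_simps)
      also have "\<dots> = (\<Sum>j<N. d i j) *\<^sub>R w k i - (\<Sum>j<N. d i j *\<^sub>R w k j)"
        by (simp add: scaleR_right_diff_distrib sum_subtractf scaleR_sum_left)
      finally show ?thesis using drs[OF i] by simp
    qed
    have "w (Suc k) i = A *v (w k i - xh k i + zh k i)"
      unfolding w_def dx[OF i] deta[OF i] zh_def by (simp add: algebra_simps)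
    also have "w k i - xh k i + zh k i = (\<Sum>j<N. d i j *\<^sub>R w k j) + e k i"
      using sw unfolding e_def by (simp add: algebra_simps)
    finally show ?thesis .
  qed
  obtain cH0 \<sigma>H where H1: "0 < \<sigma>H" "\<sigma>H < 1"
    and H2: "\<forall>k v. norm (((*v) (A - H ** C) ^^ k) v) \<le> cH0 * \<sigma>H ^ k * norm v"
    using R2[OF H] by blast
  define cH where "cH = \<bar>cH0\<bar>"
  have cH0: "0 \<le> cH" by (simp add: cH_def)
  have Hb: "norm (((*v) (A - H ** C) ^^ k) v) \<le> cH * \<sigma>H ^ k * norm v" for k v
    unfolding cH_def
    by (rule abs_bound_nonneg[where f="\<lambda>k v. ((*v) (A - H ** C) ^^ k) v" and g="\<lambda>k. \<sigma>H ^ k"])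
       (use H1 H2 in auto)
  obtain cK0 \<sigma>K where K1: "0 < \<sigma>K" "\<sigma>K < 1"
    and K2: "\<forall>k v. norm (((*v) (A - B ** K) ^^ k) v) \<le> cK0 * \<sigma>K ^ k * norm v"
    using R2[OF K] by blast
  define cK where "cK = \<bar>cK0\<bar>"
  have cK0: "0 \<le> cK" by (simp add: cK_def)
  have Kb: "norm (((*v) (A - B ** K) ^^ k) v) \<le> cK * \<sigma>K ^ k * norm v" for k v
    unfolding cK_def
    by (rule abs_bound_nonneg[where f="\<lambda>k v. ((*v) (A - B ** K) ^^ k) v" and g="\<lambda>k. \<sigma>K ^ k"])
       (use K1 K2 in auto)
  obtain cA0 dA where A2: "\<forall>k v. norm (((*v) A ^^ k) v) \<le> cA0 * (real k + 1) ^ dA * norm v"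
    using R1[OF eigA] by blast
  define cA where "cA = \<bar>cA0\<bar>"
  have cA0: "0 \<le> cA" by (simp add: cA_def)
  define Ap where "Ap = (\<lambda>n v. ((*v) A ^^ n) v)"
  have ApS: "A *v Ap n v = Ap (Suc n) v" for n v by (simp add: Ap_def)
  have Ap0: "Ap 0 v = v" for v by (simp add: Ap_def)
  have Apb: "norm (Ap n v) \<le> cA * (real n + 1) ^ dA * norm v" for n v
    unfolding cA_def Ap_def
    by (rule abs_bound_nonneg[where f="\<lambda>k v. ((*v) A ^^ k) v" and g="\<lambda>k. (real k + 1) ^ dA"])
       (use A2 in auto)
  obtain cD \<rho> where D1: "0 \<le> cD" "0 < \<rho>" "\<rho> < 1"
    and D2: "\<forall>s i m j. i < N \<longrightarrow> m < N \<longrightarrow> j < N \<longrightarrow>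
           \<bar>dpow N d s i j - dpow N d s m j\<bar> \<le> cD * \<rho> ^ s"
    using consensus[OF wd st] unfolding d_def by blast

  have eF: "e t j = ((*v) (A - H ** C) ^^ t) (e 0 j)" if j: "j < N" for t j
    by (induction t) (simp_all add: eS[OF j])
  have eb: "norm (e t j) \<le> cH * \<sigma>H ^ t * norm (e 0 j)" if "j < N" for t j
    by (subst eF[OF that]) (rule Hb)

  have wF: "w k i = (\<Sum>j<N. dpow N d k i j *\<^sub>R Ap k (w 0 j))
      + (\<Sum>t<k. \<Sum>j<N. dpow N d (k - 1 - t) i j *\<^sub>R Ap (k - t) (e t j))" if "i < N" for k i
    using that
  proof (induction k arbitrary: i)
    case 0
    have "(\<Sum>j<N. dpow N d 0 i j *\<^sub>R Ap 0 (w 0 j)) = (\<Sum>j<N. if i = j then w 0 j else 0)"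
      by (rule sum.cong) (auto simp: Ap0)
    also have "\<dots> = w 0 i" using 0 by simp
    finally show ?case by simp
  next
    case (Suc k)
    define P1 where "P1 = (\<lambda>l. \<Sum>j<N. dpow N d k l j *\<^sub>R Ap k (w 0 j))"
    define P2 where "P2 = (\<lambda>l. \<Sum>t<k. \<Sum>j<N. dpow N d (k - 1 - t) l j *\<^sub>R Ap (k - t) (e t j))"
    define T1 where "T1 = (\<Sum>j<N. dpow N d (Suc k) i j *\<^sub>R Ap k (w 0 j))"
    define T2 where "T2 = (\<Sum>t<k. \<Sum>j<N. dpow N d (Suc (k - 1 - t)) i j *\<^sub>R Ap (k - t) (e t j))"
    have "(\<Sum>l<N. d i l *\<^sub>R w k l) = (\<Sum>l<N. d i l *\<^sub>R P1 l + d i l *\<^sub>R P2 l)"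
      by (rule sum.cong[OF refl]) (auto simp: Suc.IH P1_def P2_def scaleR_add_right)
    also have "\<dots> = (\<Sum>l<N. d i l *\<^sub>R P1 l) + (\<Sum>l<N. d i l *\<^sub>R P2 l)" by (rule sum.distrib)
    also have "(\<Sum>l<N. d i l *\<^sub>R P1 l) = T1" unfolding P1_def T1_def by (rule dsum_step)
    also have "(\<Sum>l<N. d i l *\<^sub>R P2 l) = (\<Sum>l<N. \<Sum>t<k. d i l *\<^sub>R (\<Sum>j<N. dpow N d (k - 1 - t) l j *\<^sub>R Ap (k - t) (e t j)))"
      unfolding P2_def by (rule sum.cong[OF refl], rule scaleR_sum_right)
    also have "\<dots> = (\<Sum>t<k. \<Sum>l<N. d i l *\<^sub>R (\<Sum>j<N. dpow N d (k - 1 - t) l j *\<^sub>R Ap (k - t) (e t j)))"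
      by (rule sum.swap)
    also have "\<dots> = T2" unfolding T2_def by (rule sum.cong[OF refl], rule dsum_step)
    finally have s1: "(\<Sum>l<N. d i l *\<^sub>R w k l) = T1 + T2" .
    have "w (Suc k) i = A *v (T1 + T2 + e k i)" using wS[OF Suc.prems] s1 by simp
    also have "\<dots> = A *v T1 + A *v T2 + A *v e k i" by (simp add: matrix_vector_right_distrib)
    also have "A *v T1 = (\<Sum>j<N. dpow N d (Suc k) i j *\<^sub>R Ap (Suc k) (w 0 j))"
      unfolding T1_def by (simp only: mv_sum matrix_vector_mult_scaleR ApS)
    also have "A *v T2 = (\<Sum>t<k. \<Sum>j<N. dpow N d (Suc k - 1 - t) i j *\<^sub>R Ap (Suc k - t) (e t j))"
    proof -
      have "A *v T2 = (\<Sum>t<k. \<Sum>j<N. dpow N d (Suc (k - 1 - t)) i j *\<^sub>R Ap (Suc (k - t)) (e t j))"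
        unfolding T2_def by (simp only: mv_sum matrix_vector_mult_scaleR ApS)
      also have "\<dots> = (\<Sum>t<k. \<Sum>j<N. dpow N d (Suc k - 1 - t) i j *\<^sub>R Ap (Suc k - t) (e t j))"
      proof (rule sum.cong[OF refl])
        fix t assume "t \<in> {..<k}"
        hence t: "t < k" by simp
        have e1: "Suc (k - 1 - t) = Suc k - 1 - t" using t by arith
        have e2: "Suc (k - t) = Suc k - t" using t by arith
        show "(\<Sum>j<N. dpow N d (Suc (k - 1 - t)) i j *\<^sub>R Ap (Suc (k - t)) (e t j)) =
              (\<Sum>j<N. dpow N d (Suc k - 1 - t) i j *\<^sub>R Ap (Suc k - t) (e t j))"
          unfolding e1 e2 ..
      qed
      finally show ?thesis .
    qed
    also have "A *v e k i = (\<Sum>j<N. dpow N d (Suc k - 1 - k) i j *\<^sub>R Ap (Suc k - k) (e k j))"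
    proof -
      have "(\<Sum>j<N. dpow N d (Suc k - 1 - k) i j *\<^sub>R Ap (Suc k - k) (e k j)) = (\<Sum>j<N. if i = j then Ap 1 (e k j) else 0)"
        by (rule sum.cong) auto
      also have "\<dots> = Ap 1 (e k i)" using Suc.prems by simp
      also have "\<dots> = A *v e k i" by (simp add: Ap_def)
      finally show ?thesis by simp
    qed
    finally show ?case by (simp add: add.assoc)
  qed

  define \<tau> where "\<tau> = max \<rho> \<sigma>H"
  have t0: "0 < \<tau>" and t1: "\<tau> < 1" and rt: "\<rho> \<le> \<tau>" and st': "\<sigma>H \<le> \<tau>"
    using D1 H1 by (auto simp: \<tau>_def)
  define W0 where "W0 = (\<Sum>j<N. norm (w 0 j))"
  define E0 where "E0 = (\<Sum>j<N. norm (e 0 j))"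
  have W00: "0 \<le> W0" and E00: "0 \<le> E0" by (auto simp: W0_def E0_def intro: sum_nonneg)
  define Cw where "Cw = cD * cA * W0 + cD * cA * cH * E0 / \<tau>"
  have Cw0: "0 \<le> Cw" using D1 cA0 cH0 W00 E00 t0 by (simp add: Cw_def)
  have wb: "norm (w k i - w k m) \<le> Cw * ((real k + 1) ^ Suc dA * \<tau> ^ k)" if i: "i < N" and m: "m < N" for k i m
  proof -
    define X1 where "X1 = (\<Sum>j<N. (dpow N d k i j - dpow N d k m j) *\<^sub>R Ap k (w 0 j))"
    define X2 where "X2 = (\<Sum>t<k. \<Sum>j<N. (dpow N d (k - 1 - t) i j - dpow N d (k - 1 - t) m j) *\<^sub>R Ap (k - t) (e t j))"
    have dif: "w k i - w k m = X1 + X2"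
      unfolding wF[OF i] wF[OF m] X1_def X2_def
      by (simp add: sum_subtractf scaleR_left_diff_distrib algebra_simps)
    define P where "P = (real k + 1) ^ dA"
    have P0: "0 \<le> P" by (simp add: P_def)
    have b1: "norm X1 \<le> cD * cA * W0 * (P * \<rho> ^ k)"
    proof -
      have "norm X1 \<le> (\<Sum>j<N. norm ((dpow N d k i j - dpow N d k m j) *\<^sub>R Ap k (w 0 j)))"
        unfolding X1_def by (rule norm_sum)
      also have "\<dots> \<le> (\<Sum>j<N. (cD * \<rho> ^ k) * (cA * P * norm (w 0 j)))"
      proof (rule sum_mono)
        fix j assume "j \<in> {..<N}"
        hence j: "j < N" by simp
        have "\<bar>dpow N d k i j - dpow N d k m j\<bar> \<le> cD * \<rho> ^ k" using D2 i m j by blast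
        moreover have "norm (Ap k (w 0 j)) \<le> cA * P * norm (w 0 j)" unfolding P_def by (rule Apb)
        ultimately show "norm ((dpow N d k i j - dpow N d k m j) *\<^sub>R Ap k (w 0 j)) \<le> (cD * \<rho> ^ k) * (cA * P * norm (w 0 j))"
          by (simp only: norm_scaleR real_norm_def) (intro mult_mono, auto)
      qed
      also have "\<dots> = cD * cA * W0 * (P * \<rho> ^ k)"
        unfolding W0_def by (simp add: sum_distrib_left ac_simps)
      finally show ?thesis .
    qed
    define S where "S = (\<Sum>t<k. \<rho> ^ (k - 1 - t) * ((real t + 1) ^ 0 * \<sigma>H ^ t))"
    have b2: "norm X2 \<le> cD * cA * cH * E0 * P * S"
    proof -
      have "norm X2 \<le> (\<Sum>t<k. \<Sum>j<N. norm ((dpow N d (k - 1 - t) i j - dpow N d (k - 1 - t) m j) *\<^sub>R Ap (k - t) (e t j)))"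
        unfolding X2_def by (rule order_trans[OF norm_sum sum_mono[OF norm_sum]])
      also have "\<dots> \<le> (\<Sum>t<k. \<Sum>j<N. (cD * cA * cH * P) * (\<rho> ^ (k - 1 - t) * ((real t + 1) ^ 0 * \<sigma>H ^ t)) * norm (e 0 j))"
      proof (intro sum_mono)
        fix t j assume "t \<in> {..<k}" "j \<in> {..<N}"
        hence t: "t < k" and j: "j < N" by auto
        have 1: "\<bar>dpow N d (k - 1 - t) i j - dpow N d (k - 1 - t) m j\<bar> \<le> cD * \<rho> ^ (k - 1 - t)" using D2 i m j by blast
        have "norm (Ap (k - t) (e t j)) \<le> cA * (real (k - t) + 1) ^ dA * norm (e t j)" by (rule Apb)
        also have "\<dots> \<le> cA * P * (cH * \<sigma>H ^ t * norm (e 0 j))"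
          unfolding P_def using cA0 eb[OF j, of t] t
          by (intro mult_mono power_mono) auto
        finally have 2: "norm (Ap (k - t) (e t j)) \<le> cA * P * (cH * \<sigma>H ^ t * norm (e 0 j))" .
        have "norm ((dpow N d (k - 1 - t) i j - dpow N d (k - 1 - t) m j) *\<^sub>R Ap (k - t) (e t j))
              \<le> (cD * \<rho> ^ (k - 1 - t)) * (cA * P * (cH * \<sigma>H ^ t * norm (e 0 j)))"
          using 1 2 by (simp only: norm_scaleR real_norm_def) (intro mult_mono, auto)
        also have "\<dots> = (cD * cA * cH * P) * (\<rho> ^ (k - 1 - t) * ((real t + 1) ^ 0 * \<sigma>H ^ t)) * norm (e 0 j)"
          by simp
        finally show "norm ((dpow N d (k - 1 - t) i j - dpow N d (k - 1 - t) m j) *\<^sub>R Ap (k - t) (e t j))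
              \<le> (cD * cA * cH * P) * (\<rho> ^ (k - 1 - t) * ((real t + 1) ^ 0 * \<sigma>H ^ t)) * norm (e 0 j)" .
      qed
      also have "\<dots> = cD * cA * cH * E0 * P * S"
        unfolding E0_def S_def by (simp add: sum_distrib_left sum_distrib_right ac_simps) (rule sum.swap)
      finally show ?thesis .
    qed
    have Sb: "S \<le> (1/\<tau>) * ((real k + 1) ^ Suc 0 * \<tau> ^ k)"
      unfolding S_def by (rule conv_bound) (use D1 H1 t0 rt st' in auto)
    have PQ: "P * (real k + 1) = (real k + 1) ^ Suc dA" by (simp add: P_def)
    have P1: "P \<le> (real k + 1) ^ Suc dA" unfolding P_def by (rule power_increasing) auto
    have rk: "\<rho> ^ k \<le> \<tau> ^ k" using D1 rt by (intro power_mono) auto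
    have c1: "0 \<le> cD * cA * W0" using D1 cA0 W00 by simp
    have c2: "0 \<le> cD * cA * cH * E0" using D1 cA0 cH0 E00 by simp
    have "norm (w k i - w k m) \<le> norm X1 + norm X2" unfolding dif by (rule norm_triangle_ineq)
    also have "\<dots> \<le> cD * cA * W0 * (P * \<rho> ^ k) + cD * cA * cH * E0 * P * S" using b1 b2 by linarith
    also have "cD * cA * W0 * (P * \<rho> ^ k) \<le> cD * cA * W0 * ((real k + 1) ^ Suc dA * \<tau> ^ k)"
      using c1 P1 rk P0 D1 by (intro mult_left_mono mult_mono) auto
    also have "cD * cA * cH * E0 * P * S \<le> cD * cA * cH * E0 * P * ((1/\<tau>) * ((real k + 1) ^ Suc 0 * \<tau> ^ k))"
      using c2 P0 Sb by (intro mult_left_mono) auto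
    also have "cD * cA * cH * E0 * P * ((1/\<tau>) * ((real k + 1) ^ Suc 0 * \<tau> ^ k))
               = (cD * cA * cH * E0 / \<tau>) * ((P * (real k + 1)) * \<tau> ^ k)" by simp
    also have "cD * cA * W0 * ((real k + 1) ^ Suc dA * \<tau> ^ k) + (cD * cA * cH * E0 / \<tau>) * ((P * (real k + 1)) * \<tau> ^ k)
               = Cw * ((real k + 1) ^ Suc dA * \<tau> ^ k)"
      unfolding PQ Cw_def by (simp add: algebra_simps)
    finally show ?thesis by simp
  qed

  show ?thesis
  proof (intro allI impI)
    fix i m assume i: "i < N" and m: "m < N"
    define z where "z k = x k i - x k m" for k
    define f where "f k = (B ** K) *v (w k i - w k m)" for k
    obtain Bn where Bn: "Bn > 0" "\<forall>v. norm ((B ** K) *v v) \<le> norm v * Bn"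
      using bounded_linear.pos_bounded[OF matrix_vector_mul_bounded_linear[of "B ** K"]] by blast
    have zS: "z (Suc k) = (A - B ** K) *v z k + f k" for k
      unfolding z_def f_def xS[OF i] xS[OF m] w_def by (simp add: algebra_simps)
    define Mp where "Mp = (\<lambda>n v. ((*v) (A - B ** K) ^^ n) v)"
    have MpS: "(A - B ** K) *v Mp n v = Mp (Suc n) v" for n v by (simp add: Mp_def)
    have zF: "z k = Mp k (z 0) + (\<Sum>t<k. Mp (k - 1 - t) (f t))" for k
    proof (induction k)
      case 0 then show ?case by (simp add: Mp_def)
    next
      case (Suc k)
      have "z (Suc k) = (A - B ** K) *v (Mp k (z 0) + (\<Sum>t<k. Mp (k - 1 - t) (f t))) + f k"
        using zS Suc.IH by simp
      also have "\<dots> = Mp (Suc k) (z 0) + (\<Sum>t<k. Mp (Suc (k - 1 - t)) (f t)) + f k"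
        by (simp only: matrix_vector_right_distrib mv_sum MpS)
      also have "(\<Sum>t<k. Mp (Suc (k - 1 - t)) (f t)) = (\<Sum>t<k. Mp (Suc k - 1 - t) (f t))"
      proof (rule sum.cong[OF refl])
        fix t assume "t \<in> {..<k}"
        hence "Suc (k - 1 - t) = Suc k - 1 - t" by auto
        thus "Mp (Suc (k - 1 - t)) (f t) = Mp (Suc k - 1 - t) (f t)" by simp
      qed
      also have "f k = Mp (Suc k - 1 - k) (f k)" by (simp add: Mp_def)
      finally show ?case by (simp add: add.assoc)
    qed
    define \<mu> where "\<mu> = max \<sigma>K \<tau>"
    have m0: "0 < \<mu>" and m1: "\<mu> < 1" and sm: "\<sigma>K \<le> \<mu>" and tm: "\<tau> \<le> \<mu>"
      using K1 t0 t1 by (auto simp: \<mu>_def)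
    define Z0 where "Z0 = norm (z 0)"
    define g where "g k = (cK * Z0) * ((real k + 1) ^ 0 * \<sigma>K ^ k)
       + (cK * Bn * Cw / \<mu>) * ((real k + 1) ^ Suc (Suc dA) * \<mu> ^ k)" for k
    have zb: "norm (z k) \<le> g k" for k
    proof -
      have fb: "norm (f t) \<le> Bn * Cw * ((real t + 1) ^ Suc dA * \<tau> ^ t)" for t
      proof -
        have "norm (f t) \<le> norm (w t i - w t m) * Bn" unfolding f_def using Bn by blast
        also have "\<dots> \<le> Cw * ((real t + 1) ^ Suc dA * \<tau> ^ t) * Bn"
          using wb[OF i m, of t] Bn by (intro mult_right_mono) auto
        finally show ?thesis by (simp add: ac_simps)
      qed
      have "norm (z k) \<le> norm (Mp k (z 0)) + norm (\<Sum>t<k. Mp (k - 1 - t) (f t))"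
        unfolding zF[of k] by (rule norm_triangle_ineq)
      also have "norm (Mp k (z 0)) \<le> cK * \<sigma>K ^ k * Z0" unfolding Mp_def Z0_def by (rule Kb)
      also have "norm (\<Sum>t<k. Mp (k - 1 - t) (f t)) \<le> (\<Sum>t<k. (cK * Bn * Cw) * (\<sigma>K ^ (k - 1 - t) * ((real t + 1) ^ Suc dA * \<tau> ^ t)))"
      proof (rule order_trans[OF norm_sum], rule sum_mono)
        fix t assume "t \<in> {..<k}"
        have "norm (Mp (k - 1 - t) (f t)) \<le> cK * \<sigma>K ^ (k - 1 - t) * norm (f t)" unfolding Mp_def by (rule Kb)
        also have "\<dots> \<le> cK * \<sigma>K ^ (k - 1 - t) * (Bn * Cw * ((real t + 1) ^ Suc dA * \<tau> ^ t))"
          using cK0 K1 by (intro mult_left_mono fb) auto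
        finally show "norm (Mp (k - 1 - t) (f t)) \<le> (cK * Bn * Cw) * (\<sigma>K ^ (k - 1 - t) * ((real t + 1) ^ Suc dA * \<tau> ^ t))"
          by (simp add: ac_simps)
      qed
      also have "(\<Sum>t<k. (cK * Bn * Cw) * (\<sigma>K ^ (k - 1 - t) * ((real t + 1) ^ Suc dA * \<tau> ^ t)))
          = (cK * Bn * Cw) * (\<Sum>t<k. \<sigma>K ^ (k - 1 - t) * ((real t + 1) ^ Suc dA * \<tau> ^ t))"
        by (simp add: sum_distrib_left)
      also have "\<dots> \<le> (cK * Bn * Cw) * ((1/\<mu>) * ((real k + 1) ^ Suc (Suc dA) * \<mu> ^ k))"
        using cK0 Bn Cw0 K1 t0 m0 sm tm
        by (intro mult_left_mono conv_bound) auto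
      finally show ?thesis unfolding g_def by (simp add: ac_simps)
    qed
    have "g \<longlonglongrightarrow> 0 + 0"
      unfolding g_def by (intro tendsto_add poly_geo_lim K1 m0 m1)
    hence g0: "g \<longlonglongrightarrow> 0" by simp
    have "z \<longlonglongrightarrow> 0"
      by (rule Lim_null_comparison[OF _ g0]) (use zb in auto)
    thus "(\<lambda>k. x k i - x k m) \<longlonglongrightarrow> 0" unfolding z_def .
  qed
qed

theorem theorem2:
  fixes A :: "real^'n^'n" and B :: "real^'m^'n" and C :: "real^'n^'p"
    and K :: "real^'n^'m" and H :: "real^'p^'n"
  assumes eigA: "\<And>lam. is_eigenvalue A lam \<Longrightarrow> cmod lam \<le> 1"
    and stab: "stabilizable A B" and det: "detectable C A"
    and K: "schur_stable (A - B ** K)" and H: "schur_stable (A - H ** C)"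
  shows "\<forall>(N::nat) (a::nat \<Rightarrow> nat \<Rightarrow> real)
            (x::nat \<Rightarrow> nat \<Rightarrow> real^'n) (eta::nat \<Rightarrow> nat \<Rightarrow> real^'n)
            (xh::nat \<Rightarrow> nat \<Rightarrow> real^'n) (u::nat \<Rightarrow> nat \<Rightarrow> real^'m).
     N \<ge> 2 \<and> weighted_digraph N a \<and> has_spanning_tree N a \<and>
     (\<forall>k. \<forall>i<N.
        x (Suc k) i = A *v x k i + B *v u k i \<and>
        eta (Suc k) i = A *v eta k i + B *v u k i + A *v xh k i
             - A *v (\<Sum>j<N. dmat N a i j *\<^sub>R (eta k i - eta k j)) \<and>
        xh (Suc k) i = A *v xh k i - (B ** K) *v (\<Sum>j<N. dmat N a i j *\<^sub>R (eta k i - eta k j))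
             + H *v ((\<Sum>j<N. dmat N a i j *\<^sub>R (C *v x k i - C *v x k j)) - C *v xh k i) \<and>
        u k i = - (K *v eta k i))
     \<longrightarrow> (\<forall>i<N. \<forall>j<N. (\<lambda>k. x k i - x k j) \<longlonglongrightarrow> 0)"
  using main_sync[OF eigA K H] by blast
end
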